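(* Let $\mathcal{R}$ be a ring and $(\mathcal{C}^{\bullet},\partial)$ a bigraded cochain complex of $\mathcal{R}$-modules as in the context. For each $p,q\in\mathbb{Z}$ with $p+q=k$ there is a commutative diagram with exact rows and exact columns whose rows are \[ 0\to\mathcal{B}^{k}_{q}\cap\mathcal{C}^{p,q}\hookrightarrow\mathcal{B}^{k}_{q}\xrightarrow{\pi_{q+1}}\mathcal{B}^{k}_{q+1}\to0, \qquad 0\to\mathcal{Z}^{k}_{q}\cap\mathcal{C}^{p,q}\hookrightarrow\mathcal{Z}^{k}_{q}\xrightarrow{\pi_{q+1}}\mathcal{Z}^{k}_{q+1}\to0, \] \[ 0\to\frac{\mathcal{Z}^{k}_{q}\cap\mathcal{C}^{p,q}}{\mathcal{B}^{k}_{q}\cap\mathcal{C}^{p,q}}\to\frac{\mathcal{Z}^{k}_{q}}{\mathcal{B}^{k}_{q}}\xrightarrow{\bar\pi_{q+1}}\frac{\mathcal{Z}^{k}_{q+1}}{\mathcal{B}^{k}_{q+1}}\to0, \] (listed top, middle, bottom), where the vertical maps from the top to the middle row are inclusions, those from the middle to the bottom row are the canonical projections, and the bottom row maps are induced. (Here $\mathcal{Z}^{k}_{0}=Z^{k}(\mathcal{C},\partial)$ and $\mathcal{B}^{k}_{0}=B^{k}(\mathcal{C},\partial)$.)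
   Context: Setting: $\mathcal{C}^{k}=\bigoplus_{p+q=k}\mathcal{C}^{p,q}$ with $\mathcal{C}^{p,q}=\{0\}$ if $p<0$ or $q<0$; $\partial$ is $\mathcal{R}$-linear of degree $1$, $\partial^{2}=0$, $\partial=\partial_{2,-1}+\partial_{1,0}+\partial_{0,1}$ with $\partial_{i,j}(\mathcal{C}^{p,q})\subseteq\mathcal{C}^{p+i,q+j}$. $G^{q}\mathcal{C}:=\bigoplus_{j\geq q}\mathcal{C}^{i,j}$ and $\pi_{q}:\mathcal{C}\to G^{q}\mathcal{C}$ is the projection along the bigrading. $\mathcal{N}^{p,q}:=\ker(\partial_{0,1}|_{\mathcal{C}^{p,q}})\cap\ker(\partial_{2,-1}|_{\mathcal{C}^{p,q}})$, $\mathcal{N}_{q}:=\bigoplus_{p}\mathcal{N}^{p-q,q}$ (degree-$m$ part $\mathcal{N}^{m-q,q}$), a subcomplex of $(\mathcal{C},\partial)$ with differential $\overline{\partial}:=\partial|_{\mathcal{N}_q}$. For $\eta\in\mathcal{C}^k$, $(\partial\eta)_{i,j}$ is the $\mathcal{C}^{i,j}$-component of $\partial\eta$. $\mathcal{M}^{k}:=\{\eta\in\mathcal{C}^{k}\mid(\partial\eta)_{i,j}\in B^{k+1}(\mathcal{N}_{j},\overline{\partial})\ \forall\, i+j=k+1\}$; $\mathcal{Z}^{k}_{q}:=\{\pi_{q}(\eta)\mid\eta\in\mathcal{M}^{k},\ \pi_{q}(\partial\eta)=0\}$; $\mathcal{B}^{k}_{q}:=\pi_{q}(B^{k}(\mathcal{C},\partial))$.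 *)

theory Defs
  imports Main "HOL-Library.Function_Algebras"
begin

text \<open>Elements of the total complex C are families x p q with x p q in C^{p,q},
  finitely supported (the direct sum). The modules C^{p,q} are R-submodules A p q of an
  ambient left R-module 'm.\<close>

definition left_module :: "('r::ring_1 \<Rightarrow> 'm::ab_group_add \<Rightarrow> 'm) \<Rightarrow> bool" where
  "left_module sc \<longleftrightarrow>
     (\<forall>r x y. sc r (x + y) = sc r x + sc r y) \<and>
     (\<forall>r s x. sc (r + s) x = sc r x + sc s x) \<and>
     (\<forall>r s x. sc (r * s) x = sc r (sc s x)) \<and>
     (\<forall>x. sc 1 x = x)"

definition is_submod :: "('r \<Rightarrow> 'm::ab_group_add \<Rightarrow> 'm) \<Rightarrow> 'm set \<Rightarrow> bool" where
  "is_submod sc S \<longleftrightarrow> 0 \<in> S \<and> (\<forall>x\<in>S. \<forall>y\<in>S. x + y \<in> S) \<and> (\<forall>r. \<forall>x\<in>S. sc r x \<in> S)"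

definition lscale :: "('r \<Rightarrow> 'm \<Rightarrow> 'm) \<Rightarrow> 'r \<Rightarrow> (int \<Rightarrow> int \<Rightarrow> 'm) \<Rightarrow> (int \<Rightarrow> int \<Rightarrow> 'm)" where
  "lscale sc r x = (\<lambda>i j. sc r (x i j))"

definition carrierC :: "(int \<Rightarrow> int \<Rightarrow> 'm::zero set) \<Rightarrow> (int \<Rightarrow> int \<Rightarrow> 'm) set" where
  "carrierC A = {x. (\<forall>p q. x p q \<in> A p q) \<and> finite {(p, q). x p q \<noteq> 0}}"

definition Ck :: "(int \<Rightarrow> int \<Rightarrow> 'm::zero set) \<Rightarrow> int \<Rightarrow> (int \<Rightarrow> int \<Rightarrow> 'm) set" where
  "Ck A k = {x \<in> carrierC A. \<forall>p q. p + q \<noteq> k \<longrightarrow> x p q = 0}"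

definition Cpq :: "(int \<Rightarrow> int \<Rightarrow> 'm::zero set) \<Rightarrow> int \<Rightarrow> int \<Rightarrow> (int \<Rightarrow> int \<Rightarrow> 'm) set" where
  "Cpq A p q = {x \<in> carrierC A. \<forall>i j. (i, j) \<noteq> (p, q) \<longrightarrow> x i j = 0}"

definition comp :: "(int \<Rightarrow> int \<Rightarrow> 'm::zero) \<Rightarrow> int \<Rightarrow> int \<Rightarrow> (int \<Rightarrow> int \<Rightarrow> 'm)" where
  "comp x i j = (\<lambda>a b. if a = i \<and> b = j then x i j else 0)"

definition proj :: "int \<Rightarrow> (int \<Rightarrow> int \<Rightarrow> 'm::zero) \<Rightarrow> (int \<Rightarrow> int \<Rightarrow> 'm)" where
  "proj q x = (\<lambda>i j. if q \<le> j then x i j else 0)"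

definition lin_on :: "('r \<Rightarrow> 'm::ab_group_add \<Rightarrow> 'm) \<Rightarrow> (int \<Rightarrow> int \<Rightarrow> 'm set)
    \<Rightarrow> ((int \<Rightarrow> int \<Rightarrow> 'm) \<Rightarrow> (int \<Rightarrow> int \<Rightarrow> 'm)) \<Rightarrow> bool" where
  "lin_on sc A f \<longleftrightarrow> f ` carrierC A \<subseteq> carrierC A \<and>
     (\<forall>x\<in>carrierC A. \<forall>y\<in>carrierC A. f (x + y) = f x + f y) \<and>
     (\<forall>r. \<forall>x\<in>carrierC A. f (lscale sc r x) = lscale sc r (f x))"

definition bigraded_complex where
  "bigraded_complex sc A d d21 d10 d01 \<longleftrightarrow>
     left_module sc \<and>
     (\<forall>p q. is_submod sc (A p q)) \<and>
     (\<forall>p q. p < 0 \<or> q < 0 \<longrightarrow> A p q = {0}) \<and>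
     lin_on sc A d \<and> lin_on sc A d21 \<and> lin_on sc A d10 \<and> lin_on sc A d01 \<and>
     (\<forall>p q. d21 ` Cpq A p q \<subseteq> Cpq A (p + 2) (q - 1)) \<and>
     (\<forall>p q. d10 ` Cpq A p q \<subseteq> Cpq A (p + 1) q) \<and>
     (\<forall>p q. d01 ` Cpq A p q \<subseteq> Cpq A p (q + 1)) \<and>
     (\<forall>x\<in>carrierC A. d x = d21 x + d10 x + d01 x) \<and>
     (\<forall>k. d ` Ck A k \<subseteq> Ck A (k + 1)) \<and>
     (\<forall>x\<in>carrierC A. d (d x) = 0)"

definition Npq where
  "Npq A d21 d01 p q = {x \<in> Cpq A p q. d01 x = 0 \<and> d21 x = 0}"

text \<open>B^{k+1}(N_j, dbar): image of the degree-k part N^{k-j,j} of N_j\<close>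
definition BN where
  "BN A d d21 d01 k j = d ` Npq A d21 d01 (k - j) j"

definition Mk where
  "Mk A d d21 d01 k = {\<eta> \<in> Ck A k. \<forall>i j. i + j = k + 1 \<longrightarrow> comp (d \<eta>) i j \<in> BN A d d21 d01 k j}"

definition Zkq where
  "Zkq A d d21 d01 k q = {proj q \<eta> | \<eta>. \<eta> \<in> Mk A d d21 d01 k \<and> proj q (d \<eta>) = 0}"

definition Bkq where
  "Bkq A d k q = proj q ` (d ` Ck A (k - 1))"

text \<open>Quotients as sets of cosets\<close>
definition coset :: "'a::plus set \<Rightarrow> 'a \<Rightarrow> 'a set" where
  "coset T z = (\<lambda>t. z + t) ` T"

definition cosets :: "'a::plus set \<Rightarrow> 'a set \<Rightarrow> 'a set set" where
  "cosets S T = coset T ` S"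

definition qmap :: "('a \<Rightarrow> 'b::plus) \<Rightarrow> 'b set \<Rightarrow> 'a set \<Rightarrow> 'b set" where
  "qmap f T X = coset T (f (SOME x. x \<in> X))"

definition short_exact :: "('a \<Rightarrow> 'b) \<Rightarrow> ('b \<Rightarrow> 'c) \<Rightarrow> 'c \<Rightarrow> 'a set \<Rightarrow> 'b set \<Rightarrow> 'c set \<Rightarrow> bool" where
  "short_exact f g zW X Y W \<longleftrightarrow> inj_on f X \<and> f ` X = {y \<in> Y. g y = zW} \<and> g ` Y = W"

end

theory Submission
  imports Defs
begin

definition grp :: "'a::ab_group_add set \<Rightarrow> bool" where
  "grp T \<longleftrightarrow> 0 \<in> T \<and> (\<forall>x\<in>T. \<forall>y\<in>T. x + y \<in> T) \<and> (\<forall>x\<in>T. - x \<in> T)"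

lemma grp_diff: "grp T \<Longrightarrow> x \<in> T \<Longrightarrow> y \<in> T \<Longrightarrow> x - y \<in> T"
  unfolding grp_def by (metis diff_conv_add_uminus)

lemma mem_coset: fixes x :: "'a::ab_group_add" shows "x \<in> coset T z \<longleftrightarrow> x - z \<in> T"
proof
  assume "x \<in> coset T z" thus "x - z \<in> T" unfolding coset_def by auto
next
  assume "x - z \<in> T"
  moreover have "x = z + (x - z)" by simp
  ultimately show "x \<in> coset T z" unfolding coset_def by blast
qed

lemma coset_eq: assumes "grp T" shows "coset T x = coset T y \<longleftrightarrow> x - y \<in> T"
proof
  assume "coset T x = coset T y"
  moreover have "x \<in> coset T x" using assms by (simp add: mem_coset grp_def)
  ultimately show "x - y \<in> T" by (simp add: mem_coset)
next
  assume h: "x - y \<in> T"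
  have h2: "y - x \<in> T" using h assms unfolding grp_def by (metis minus_diff_eq)
  show "coset T x = coset T y"
  proof (rule set_eqI)
    fix w
    have "w - x \<in> T \<Longrightarrow> w - y \<in> T" using assms h unfolding grp_def
      by (metis diff_add_cancel add_diff_eq diff_diff_eq2)
    moreover have "w - y \<in> T \<Longrightarrow> w - x \<in> T" using assms h2 unfolding grp_def
      by (metis diff_add_cancel add_diff_eq diff_diff_eq2)
    ultimately show "w \<in> coset T x \<longleftrightarrow> w \<in> coset T y" by (auto simp: mem_coset)
  qed
qed

lemma coset_0: "coset (T::'a::ab_group_add set) 0 = T"
  unfolding coset_def by (simp add: image_def)

lemma qmap_coset:
  fixes z :: "'a::ab_group_add" and f :: "'a \<Rightarrow> 'b::ab_group_add"
  assumes "grp T'" "0 \<in> T" "\<And>x. x - z \<in> T \<Longrightarrow> f x - f z \<in> T'"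
  shows "qmap f T' (coset T z) = coset T' (f z)"
proof -
  have "z \<in> coset T z" using assms(2) by (simp add: mem_coset)
  hence "(SOME x. x \<in> coset T z) \<in> coset T z" by (rule someI)
  hence "(SOME x. x \<in> coset T z) - z \<in> T" by (simp add: mem_coset)
  thus ?thesis unfolding qmap_def using assms(1,3) coset_eq by blast
qed

locale bc =
  fixes sc :: "'r::ring_1 \<Rightarrow> 'm::ab_group_add \<Rightarrow> 'm"
    and A :: "int \<Rightarrow> int \<Rightarrow> 'm set"
    and d d21 d10 d01 :: "(int \<Rightarrow> int \<Rightarrow> 'm) \<Rightarrow> (int \<Rightarrow> int \<Rightarrow> 'm)"
  assumes cx: "bigraded_complex sc A d d21 d10 d01"
begin

lemma lm: "left_module sc" using cx by (simp add: bigraded_complex_def)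

lemma sc_zero: "sc 0 x = 0"
proof -
  have "sc (0 + 0) x = sc 0 x + sc 0 x" using lm unfolding left_module_def by blast
  thus ?thesis by simp
qed

lemma sc_0: "sc r 0 = 0"
proof -
  have "sc r (0 + 0) = sc r 0 + sc r 0" using lm unfolding left_module_def by blast
  thus ?thesis by simp
qed

lemma sc_neg1: "sc (-1) x = - x"
proof -
  have "sc (-1 + 1) x = sc (-1) x + sc 1 x" using lm unfolding left_module_def by blast
  moreover have "sc 1 x = x" using lm unfolding left_module_def by blast
  ultimately have "0 = sc (-1) x + x" using sc_zero by simp
  thus ?thesis by (simp add: eq_neg_iff_add_eq_0)
qed

lemma lscale_neg1: "lscale sc (-1) x = - x"
  by (simp add: lscale_def sc_neg1 fun_eq_iff)

lemma submod_grp: "is_submod (lscale sc) S \<Longrightarrow> grp S"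
  unfolding is_submod_def grp_def by (metis lscale_neg1)

lemma submod_diff: "is_submod (lscale sc) S \<Longrightarrow> x \<in> S \<Longrightarrow> y \<in> S \<Longrightarrow> x - y \<in> S"
  using submod_grp grp_diff by blast

lemma submod_Int: "is_submod L S \<Longrightarrow> is_submod L T \<Longrightarrow> is_submod L (S \<inter> T)"
  unfolding is_submod_def by blast

lemma Asub: "is_submod sc (A p q)" using cx by (simp add: bigraded_complex_def)

lemma A0: "0 \<in> A p q" using Asub by (simp add: is_submod_def)
lemma Aadd: "x \<in> A p q \<Longrightarrow> y \<in> A p q \<Longrightarrow> x + y \<in> A p q" using Asub by (simp add: is_submod_def)
lemma Ascale: "x \<in> A p q \<Longrightarrow> sc r x \<in> A p q" using Asub by (simp add: is_submod_def)

lemma car_0: "0 \<in> carrierC A" by (simp add: carrierC_def A0)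

lemma car_add: "x \<in> carrierC A \<Longrightarrow> y \<in> carrierC A \<Longrightarrow> x + y \<in> carrierC A"
  unfolding carrierC_def
proof (safe)
  fix p q assume "\<forall>p q. x p q \<in> A p q" "\<forall>p q. y p q \<in> A p q"
  thus "(x + y) p q \<in> A p q" by (simp add: Aadd)
next
  assume "finite {(p, q). x p q \<noteq> 0}" "finite {(p, q). y p q \<noteq> 0}"
  hence "finite ({(p, q). x p q \<noteq> 0} \<union> {(p, q). y p q \<noteq> 0})" by simp
  moreover have "{(p, q). (x + y) p q \<noteq> 0} \<subseteq> {(p, q). x p q \<noteq> 0} \<union> {(p, q). y p q \<noteq> 0}" by auto
  ultimately show "finite {(p, q). (x + y) p q \<noteq> 0}" by (rule finite_subset[rotated])
qed

lemma car_scale: "x \<in> carrierC A \<Longrightarrow> lscale sc r x \<in> carrierC A"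
  unfolding carrierC_def
proof (safe)
  fix p q assume "\<forall>p q. x p q \<in> A p q"
  thus "lscale sc r x p q \<in> A p q" by (simp add: lscale_def Ascale)
next
  assume "finite {(p, q). x p q \<noteq> 0}"
  moreover have "{(p, q). lscale sc r x p q \<noteq> 0} \<subseteq> {(p, q). x p q \<noteq> 0}" by (auto simp: lscale_def sc_0)
  ultimately show "finite {(p, q). lscale sc r x p q \<noteq> 0}" by (rule finite_subset[rotated])
qed

lemma car_submod: "is_submod (lscale sc) (carrierC A)"
  unfolding is_submod_def using car_0 car_add car_scale by blast

lemma car_neg: "x \<in> carrierC A \<Longrightarrow> - x \<in> carrierC A"
  using car_scale lscale_neg1 by metis

lemma car_diff: "x \<in> carrierC A \<Longrightarrow> y \<in> carrierC A \<Longrightarrow> x - y \<in> carrierC A"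
  using car_add car_neg by (metis diff_conv_add_uminus)

lemma proj_car: "x \<in> carrierC A \<Longrightarrow> proj q x \<in> carrierC A"
  unfolding carrierC_def
proof (safe)
  fix i j assume "\<forall>p q. x p q \<in> A p q"
  thus "proj q x i j \<in> A i j" by (simp add: proj_def A0)
next
  assume "finite {(p, q). x p q \<noteq> 0}"
  moreover have "{(i, j). proj q x i j \<noteq> 0} \<subseteq> {(p, q). x p q \<noteq> 0}" by (auto simp: proj_def)
  ultimately show "finite {(i, j). proj q x i j \<noteq> 0}" by (rule finite_subset[rotated])
qed

lemma proj_add: "proj q ((x::int\<Rightarrow>int\<Rightarrow>'m) + y) = proj q x + proj q y"
  by (simp add: proj_def fun_eq_iff)
lemma proj_diff: "proj q ((x::int\<Rightarrow>int\<Rightarrow>'m) - y) = proj q x - proj q y"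
  by (simp add: proj_def fun_eq_iff)
lemma proj_zero: "proj q 0 = (0::int\<Rightarrow>int\<Rightarrow>'m)"
  by (simp add: proj_def fun_eq_iff)
lemma proj_scale: "proj q (lscale sc r x) = lscale sc r (proj q x)"
  by (simp add: proj_def lscale_def fun_eq_iff sc_0)
lemma proj_proj: "a \<le> b \<Longrightarrow> proj b (proj a (x::int\<Rightarrow>int\<Rightarrow>'m)) = proj b x"
  by (simp add: proj_def fun_eq_iff)
lemma proj_proj': "proj a (proj a (x::int\<Rightarrow>int\<Rightarrow>'m)) = proj a x"
  by (simp add: proj_def fun_eq_iff)

lemma lin_props:
  assumes "lin_on sc A f"
  shows "f 0 = 0" "\<And>x. x \<in> carrierC A \<Longrightarrow> f x \<in> carrierC A"
    "\<And>x y. x \<in> carrierC A \<Longrightarrow> y \<in> carrierC A \<Longrightarrow> f (x + y) = f x + f y"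
    "\<And>x y. x \<in> carrierC A \<Longrightarrow> y \<in> carrierC A \<Longrightarrow> f (x - y) = f x - f y"
    "\<And>x. x \<in> carrierC A \<Longrightarrow> f (lscale sc r x) = lscale sc r (f x)"
proof -
  have ad: "\<And>x y. x \<in> carrierC A \<Longrightarrow> y \<in> carrierC A \<Longrightarrow> f (x + y) = f x + f y"
    using assms by (simp add: lin_on_def)
  have "f (0 + 0) = f 0 + f 0" using ad car_0 by blast
  thus "f 0 = 0" by simp
  show "\<And>x. x \<in> carrierC A \<Longrightarrow> f x \<in> carrierC A" using assms by (auto simp: lin_on_def)
  show "\<And>x y. x \<in> carrierC A \<Longrightarrow> y \<in> carrierC A \<Longrightarrow> f (x + y) = f x + f y" by (rule ad)
  show "\<And>x. x \<in> carrierC A \<Longrightarrow> f (lscale sc r x) = lscale sc r (f x)"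
    using assms by (simp add: lin_on_def)
  fix x y assume x: "x \<in> carrierC A" and y: "y \<in> carrierC A"
  have "f (x - y + y) = f (x - y) + f y" using ad car_diff x y by blast
  thus "f (x - y) = f x - f y" by (simp add: algebra_simps)
qed

lemma lin_d: "lin_on sc A d" using cx by (simp add: bigraded_complex_def)
lemma lin_d21: "lin_on sc A d21" using cx by (simp add: bigraded_complex_def)
lemma lin_d01: "lin_on sc A d01" using cx by (simp add: bigraded_complex_def)
lemma lin_d10: "lin_on sc A d10" using cx by (simp add: bigraded_complex_def)

lemmas d_props = lin_props[OF lin_d]
lemmas d21_props = lin_props[OF lin_d21]
lemmas d01_props = lin_props[OF lin_d01]
lemmas d10_props = lin_props[OF lin_d10]

lemma submod_image:
  assumes "is_submod (lscale sc) S" "S \<subseteq> carrierC A" "f 0 = 0"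
    "\<And>x y. x \<in> carrierC A \<Longrightarrow> y \<in> carrierC A \<Longrightarrow> f (x + y) = f x + f y"
    "\<And>r x. x \<in> carrierC A \<Longrightarrow> f (lscale sc r x) = lscale sc r (f x)"
  shows "is_submod (lscale sc) (f ` S)"
  unfolding is_submod_def
proof (intro conjI ballI allI)
  show "0 \<in> f ` S" using assms(1,3) by (metis image_eqI is_submod_def)
  fix x y assume "x \<in> f ` S" "y \<in> f ` S"
  then obtain a b where "a \<in> S" "b \<in> S" "x = f a" "y = f b" by blast
  moreover have "a + b \<in> S" using assms(1) \<open>a \<in> S\<close> \<open>b \<in> S\<close> unfolding is_submod_def by blast
  moreover have "f (a + b) = f a + f b" using assms(2,4) \<open>a \<in> S\<close> \<open>b \<in> S\<close> by blast
  ultimately show "x + y \<in> f ` S" by (metis image_eqI)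
next
  fix r x assume "x \<in> f ` S"
  then obtain a where "a \<in> S" "x = f a" by blast
  moreover have "lscale sc r a \<in> S" using assms(1) \<open>a \<in> S\<close> unfolding is_submod_def by blast
  moreover have "f (lscale sc r a) = lscale sc r (f a)" using assms(2,5) \<open>a \<in> S\<close> by blast
  ultimately show "lscale sc r x \<in> f ` S" by (metis image_eqI)
qed


lemma lscale_0: "lscale sc r 0 = 0" by (simp add: lscale_def fun_eq_iff sc_0)

lemma Ck_car: "Ck A k \<subseteq> carrierC A" by (auto simp: Ck_def)
lemma Cpq_car: "Cpq A p q \<subseteq> carrierC A" by (auto simp: Cpq_def)

lemma Ck_submod: "is_submod (lscale sc) (Ck A k)"
  unfolding is_submod_def Ck_def using car_0 car_add car_scale
  by (auto simp: lscale_def sc_0)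

lemma Cpq_submod: "is_submod (lscale sc) (Cpq A p q)"
  unfolding is_submod_def Cpq_def using car_0 car_add car_scale
  by (auto simp: lscale_def sc_0)

lemma Cpq_Ck: "Cpq A p q \<subseteq> Ck A (p + q)"
  by (auto simp: Cpq_def Ck_def)

lemma proj_Ck: "x \<in> Ck A k \<Longrightarrow> proj q x \<in> Ck A k"
  using proj_car by (auto simp: Ck_def proj_def)

lemma d_Ck: "x \<in> Ck A k \<Longrightarrow> d x \<in> Ck A (k + 1)"
  using cx unfolding bigraded_complex_def by blast

lemma dd: "x \<in> carrierC A \<Longrightarrow> d (d x) = 0"
  using cx by (auto simp: bigraded_complex_def)

lemma Npq_submod: "is_submod (lscale sc) (Npq A d21 d01 p q)"
proof -
  have c: "is_submod (lscale sc) (Cpq A p q)" by (rule Cpq_submod)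
  show ?thesis unfolding is_submod_def Npq_def
  proof (intro conjI ballI allI)
    show "0 \<in> {x \<in> Cpq A p q. d01 x = 0 \<and> d21 x = 0}"
      using c d01_props(1) d21_props(1) by (simp add: is_submod_def)
  next
    fix x y assume x: "x \<in> {x \<in> Cpq A p q. d01 x = 0 \<and> d21 x = 0}"
      and y: "y \<in> {x \<in> Cpq A p q. d01 x = 0 \<and> d21 x = 0}"
    have xc: "x \<in> carrierC A" "y \<in> carrierC A" using x y Cpq_car by auto
    show "x + y \<in> {x \<in> Cpq A p q. d01 x = 0 \<and> d21 x = 0}"
      using x y c xc d01_props(3) d21_props(3) by (simp add: is_submod_def)
  next
    fix r x assume x: "x \<in> {x \<in> Cpq A p q. d01 x = 0 \<and> d21 x = 0}"
    have xc: "x \<in> carrierC A" using x Cpq_car by auto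
    show "lscale sc r x \<in> {x \<in> Cpq A p q. d01 x = 0 \<and> d21 x = 0}"
      using x c xc d01_props(5) d21_props(5) lscale_0 by (simp add: is_submod_def)
  qed
qed

lemma Npq_car: "Npq A d21 d01 p q \<subseteq> carrierC A"
  using Cpq_car by (auto simp: Npq_def)

lemma BN_submod: "is_submod (lscale sc) (BN A d d21 d01 k j)"
  unfolding BN_def
  by (rule submod_image[OF Npq_submod Npq_car d_props(1) d_props(3) d_props(5)])

lemma BN_0: "0 \<in> BN A d d21 d01 k j"
  using BN_submod by (simp add: is_submod_def)

lemma comp_add: "comp ((x::int\<Rightarrow>int\<Rightarrow>'m) + y) i j = comp x i j + comp y i j"
  by (simp add: comp_def fun_eq_iff)
lemma comp_zero: "comp 0 i j = (0::int\<Rightarrow>int\<Rightarrow>'m)"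
  by (simp add: comp_def fun_eq_iff)
lemma comp_scale: "comp (lscale sc r x) i j = lscale sc r (comp x i j)"
  by (simp add: comp_def lscale_def fun_eq_iff sc_0)

lemma Mk_car: "Mk A d d21 d01 k \<subseteq> Ck A k" by (auto simp: Mk_def)

lemma Mk_submod: "is_submod (lscale sc) (Mk A d d21 d01 k)"
  unfolding is_submod_def
proof (intro conjI ballI allI)
  show "0 \<in> Mk A d d21 d01 k"
    using Ck_submod BN_0 d_props(1) comp_zero by (simp add: is_submod_def Mk_def)
next
  fix x y assume x: "x \<in> Mk A d d21 d01 k" and y: "y \<in> Mk A d d21 d01 k"
  have xc: "x \<in> carrierC A" "y \<in> carrierC A" using x y Mk_car Ck_car by auto
  show "x + y \<in> Mk A d d21 d01 k"
    using x y xc Ck_submod BN_submod d_props(3) comp_add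
    unfolding Mk_def is_submod_def by auto
next
  fix r x assume x: "x \<in> Mk A d d21 d01 k"
  have xc: "x \<in> carrierC A" using x Mk_car Ck_car by auto
  show "lscale sc r x \<in> Mk A d d21 d01 k"
    using x xc Ck_submod BN_submod d_props(5) comp_scale
    unfolding Mk_def is_submod_def by auto
qed

definition Mk0 where "Mk0 k q = {\<eta> \<in> Mk A d d21 d01 k. proj q (d \<eta>) = 0}"

lemma Mk0_car: "Mk0 k q \<subseteq> carrierC A" using Mk_car Ck_car by (auto simp: Mk0_def)

lemma Mk0_submod: "is_submod (lscale sc) (Mk0 k q)"
  unfolding is_submod_def
proof (intro conjI ballI allI)
  show "0 \<in> Mk0 k q"
    using Mk_submod d_props(1) proj_zero by (simp add: is_submod_def Mk0_def)
next
  fix x y assume x: "x \<in> Mk0 k q" and y: "y \<in> Mk0 k q"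
  have xc: "x \<in> carrierC A" "y \<in> carrierC A" using x y Mk0_car by auto
  show "x + y \<in> Mk0 k q"
    using x y xc Mk_submod d_props(3) proj_add
    unfolding Mk0_def is_submod_def by auto
next
  fix r x assume x: "x \<in> Mk0 k q"
  have xc: "x \<in> carrierC A" using x Mk0_car by auto
  show "lscale sc r x \<in> Mk0 k q"
    using x xc Mk_submod d_props(5) proj_scale lscale_0
    unfolding Mk0_def is_submod_def by auto
qed

lemma Zkq_eq: "Zkq A d d21 d01 k q = proj q ` Mk0 k q"
  unfolding Zkq_def Mk0_def by auto

lemma Zkq_submod: "is_submod (lscale sc) (Zkq A d d21 d01 k q)"
  unfolding Zkq_eq
  by (rule submod_image[OF Mk0_submod Mk0_car proj_zero proj_add proj_scale])

lemma dCk_car: "d ` Ck A k \<subseteq> carrierC A"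
  using Ck_car d_props(2) by auto

lemma Bkq_submod: "is_submod (lscale sc) (Bkq A d k q)"
  unfolding Bkq_def
  by (rule submod_image[OF submod_image[OF Ck_submod Ck_car d_props(1) d_props(3) d_props(5)]
      dCk_car proj_zero proj_add proj_scale])

lemma Bkq_Ck: "Bkq A d k q \<subseteq> Ck A k"
  unfolding Bkq_def using d_Ck proj_Ck by fastforce

lemma Zkq_Ck: "Zkq A d d21 d01 k q \<subseteq> Ck A k"
  unfolding Zkq_def using Mk_car proj_Ck by fastforce

lemma Bkq_fix: "y \<in> Bkq A d k q \<Longrightarrow> proj q y = y"
  unfolding Bkq_def using proj_proj' by auto

lemma Zkq_fix: "y \<in> Zkq A d d21 d01 k q \<Longrightarrow> proj q y = y"
  unfolding Zkq_def using proj_proj' by auto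

lemma Cpq_proj: "y \<in> Cpq A p q \<Longrightarrow> proj (q + 1) y = 0"
  by (auto simp: Cpq_def proj_def fun_eq_iff)

lemma proj_Cpq:
  assumes "y \<in> Ck A k" "p + q = k" "proj q y = y" "proj (q + 1) y = 0"
  shows "y \<in> Cpq A p q"
proof -
  have "y i j = 0" if "(i, j) \<noteq> (p, q)" for i j
  proof (cases "j = q")
    case True
    then show ?thesis using assms(1,2) that by (auto simp: Ck_def)
  next
    case False
    show ?thesis
    proof (cases "q < j")
      case True
      have "proj (q + 1) y i j = 0" using assms(4) by simp
      then show ?thesis using True by (simp add: proj_def split: if_splits)
    next
      case False
      hence "\<not> q \<le> j" using \<open>j \<noteq> q\<close> by simp
      moreover have "proj q y i j = y i j" using assms(3) by simp
      ultimately show ?thesis by (simp add: proj_def)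
    qed
  qed
  thus ?thesis using assms(1) by (auto simp: Ck_def Cpq_def)
qed

lemma Bkq_proj: "proj (q + 1) ` Bkq A d k q = Bkq A d k (q + 1)"
  unfolding Bkq_def image_image using proj_proj[of q "q+1"] by simp

lemma Bkq_Zkq: "Bkq A d k q \<subseteq> Zkq A d d21 d01 k q"
proof
  fix y assume "y \<in> Bkq A d k q"
  then obtain x where x: "x \<in> Ck A (k - 1)" "y = proj q (d x)" unfolding Bkq_def by auto
  have dx: "d x \<in> Ck A k" using d_Ck[OF x(1)] by simp
  have ddx: "d (d x) = 0" using dd x(1) Ck_car by auto
  have "d x \<in> Mk A d d21 d01 k" using dx ddx BN_0 comp_zero by (simp add: Mk_def)
  thus "y \<in> Zkq A d d21 d01 k q" unfolding Zkq_def using x(2) ddx proj_zero by auto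
qed

lemma Zkq_proj1: "proj (q + 1) ` Zkq A d d21 d01 k q \<subseteq> Zkq A d d21 d01 k (q + 1)"
proof
  fix z assume "z \<in> proj (q + 1) ` Zkq A d d21 d01 k q"
  then obtain \<eta> where e: "\<eta> \<in> Mk A d d21 d01 k" "proj q (d \<eta>) = 0" "z = proj (q+1) (proj q \<eta>)"
    unfolding Zkq_def by auto
  have "proj (q + 1) (d \<eta>) = 0" using e(2) proj_proj[of q "q+1" "d \<eta>"] proj_zero by simp
  thus "z \<in> Zkq A d d21 d01 k (q + 1)" unfolding Zkq_def using e(1,3) proj_proj[of q "q+1"] by auto
qed


lemma Zkq_proj2: "Zkq A d d21 d01 k (q + 1) \<subseteq> proj (q + 1) ` Zkq A d d21 d01 k q"
proof
  fix z assume "z \<in> Zkq A d d21 d01 k (q + 1)"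
  then obtain \<eta> where e: "\<eta> \<in> Mk A d d21 d01 k" "proj (q + 1) (d \<eta>) = 0" "z = proj (q+1) \<eta>"
    unfolding Zkq_def by auto
  define p where "p = k - q"
  have ec: "\<eta> \<in> Ck A k" using e(1) Mk_car by auto
  have de: "d \<eta> \<in> Ck A (k + 1)" using d_Ck[OF ec] .
  have "comp (d \<eta>) (p + 1) q \<in> BN A d d21 d01 k q" using e(1) unfolding Mk_def p_def by auto
  then obtain n where n: "n \<in> Npq A d21 d01 p q" "d n = comp (d \<eta>) (p + 1) q"
    unfolding BN_def p_def by auto
  have nC: "n \<in> Cpq A p q" using n(1) by (simp add: Npq_def)
  have nCk: "n \<in> Ck A k" using nC Cpq_Ck p_def by fastforce
  have nc: "n \<in> carrierC A" using nC Cpq_car by auto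
  have dnBN: "d n \<in> BN A d d21 d01 k q" using n(1) unfolding BN_def p_def by auto
  have "comp (d n) i j \<in> BN A d d21 d01 k j" for i j
  proof (cases "i = p + 1 \<and> j = q")
    case True
    have "comp (d n) i j = d n" using True n(2) by (auto simp: comp_def fun_eq_iff)
    then show ?thesis using dnBN True by simp
  next
    case False
    have "comp (d n) i j = 0" using False n(2) by (auto simp: comp_def fun_eq_iff)
    then show ?thesis using BN_0 by simp
  qed
  hence nM: "n \<in> Mk A d d21 d01 k" using nCk by (simp add: Mk_def)
  define \<eta>' where "\<eta>' = \<eta> - n"
  have e'M: "\<eta>' \<in> Mk A d d21 d01 k" unfolding \<eta>'_def by (rule submod_diff[OF Mk_submod e(1) nM])
  have de': "d \<eta>' = d \<eta> - d n" unfolding \<eta>'_def using d_props(4) ec Ck_car nc by auto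
  have "proj q (d \<eta>') i j = 0" for i j
  proof (cases "q \<le> j")
    case False thus ?thesis by (simp add: proj_def)
  next
    case True
    show ?thesis
    proof (cases "j = q")
      case True
      show ?thesis
      proof (cases "i = p + 1")
        case True
        thus ?thesis using \<open>j = q\<close> de' n(2) by (simp add: proj_def comp_def)
      next
        case False
        have "i + j \<noteq> k + 1" using False \<open>j = q\<close> p_def by simp
        hence "d \<eta> i j = 0" using de by (simp add: Ck_def)
        thus ?thesis using False \<open>j = q\<close> de' n(2) by (simp add: proj_def comp_def)
      qed
    next
      case False
      hence "q + 1 \<le> j" using True by simp
      moreover have "proj (q + 1) (d \<eta>) i j = 0" using e(2) by simp
      ultimately have "d \<eta> i j = 0" by (simp add: proj_def)
      thus ?thesis using False de' n(2) by (simp add: proj_def comp_def)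
    qed
  qed
  hence "proj q (d \<eta>') = 0" by (simp add: fun_eq_iff)
  hence Z: "proj q \<eta>' \<in> Zkq A d d21 d01 k q" unfolding Zkq_def using e'M by auto
  have "proj (q + 1) (proj q \<eta>') = proj (q + 1) \<eta>' " using proj_proj by simp
  also have "\<dots> = proj (q + 1) \<eta>" unfolding \<eta>'_def proj_diff Cpq_proj[OF nC] by simp
  finally show "z \<in> proj (q + 1) ` Zkq A d d21 d01 k q" using Z e(3) by (metis image_eqI)
qed

lemma Zkq_proj: "proj (q + 1) ` Zkq A d d21 d01 k q = Zkq A d d21 d01 k (q + 1)"
  using Zkq_proj1 Zkq_proj2 by blast

end

lemma column_exact:
  fixes T :: "'a::ab_group_add set"
  assumes "grp T" "T \<subseteq> S"
  shows "short_exact id (coset T) (coset T 0) T S (cosets S T)"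
  unfolding short_exact_def
proof (intro conjI)
  show "inj_on id T" by simp
  show "id ` T = {y \<in> S. coset T y = coset T 0}"
    using assms coset_eq[OF assms(1)] by auto
  show "coset T ` S = cosets S T" by (simp add: cosets_def)
qed

theorem theorem3p3:
  fixes sc :: "'r::ring_1 \<Rightarrow> 'm::ab_group_add \<Rightarrow> 'm"
    and A :: "int \<Rightarrow> int \<Rightarrow> 'm set"
    and d d21 d10 d01 :: "(int \<Rightarrow> int \<Rightarrow> 'm) \<Rightarrow> (int \<Rightarrow> int \<Rightarrow> 'm)"
    and p q k :: int
  assumes cx: "bigraded_complex sc A d d21 d10 d01"
    and pq: "p + q = k"
  defines "Bq \<equiv> Bkq A d k q" and "Bq1 \<equiv> Bkq A d k (q + 1)"
    and "Zq \<equiv> Zkq A d d21 d01 k q" and "Zq1 \<equiv> Zkq A d d21 d01 k (q + 1)"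
    and "BC \<equiv> Bkq A d k q \<inter> Cpq A p q" and "ZC \<equiv> Zkq A d d21 d01 k q \<inter> Cpq A p q"
  shows
    \<comment> \<open>all objects are R-submodules of C\<close>
    "is_submod (lscale sc) Bq \<and> is_submod (lscale sc) Bq1 \<and>
     is_submod (lscale sc) Zq \<and> is_submod (lscale sc) Zq1 \<and>
     is_submod (lscale sc) BC \<and> is_submod (lscale sc) ZC \<and>
     \<comment> \<open>rows: top, middle, bottom\<close>
     short_exact id (proj (q + 1)) 0 BC Bq Bq1 \<and>
     short_exact id (proj (q + 1)) 0 ZC Zq Zq1 \<and>
     short_exact (qmap id Bq) (qmap (proj (q + 1)) Bq1) (coset Bq1 0)
       (cosets ZC BC) (cosets Zq Bq) (cosets Zq1 Bq1) \<and>
     \<comment> \<open>columns: inclusions followed by canonical projections\<close>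
     short_exact id (coset BC) (coset BC 0) BC ZC (cosets ZC BC) \<and>
     short_exact id (coset Bq) (coset Bq 0) Bq Zq (cosets Zq Bq) \<and>
     short_exact id (coset Bq1) (coset Bq1 0) Bq1 Zq1 (cosets Zq1 Bq1) \<and>
     \<comment> \<open>commutativity of the squares\<close>
     (\<forall>b\<in>BC. id (id b) = id (id b)) \<and>
     (\<forall>b\<in>Bq. proj (q + 1) (id b) = id (proj (q + 1) b)) \<and>
     (\<forall>z\<in>ZC. qmap id Bq (coset BC z) = coset Bq (id z)) \<and>
     (\<forall>z\<in>Zq. qmap (proj (q + 1)) Bq1 (coset Bq z) = coset Bq1 (proj (q + 1) z))"
proof -
  interpret bc sc A d d21 d10 d01 by (rule bc.intro[OF cx])
  have sBq: "is_submod (lscale sc) Bq" unfolding Bq_def by (rule Bkq_submod)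
  have sBq1: "is_submod (lscale sc) Bq1" unfolding Bq1_def by (rule Bkq_submod)
  have sZq: "is_submod (lscale sc) Zq" unfolding Zq_def by (rule Zkq_submod)
  have sZq1: "is_submod (lscale sc) Zq1" unfolding Zq1_def by (rule Zkq_submod)
  have sBC: "is_submod (lscale sc) BC" unfolding BC_def by (rule submod_Int[OF Bkq_submod Cpq_submod])
  have sZC: "is_submod (lscale sc) ZC" unfolding ZC_def by (rule submod_Int[OF Zkq_submod Cpq_submod])
  have gBq: "grp Bq" and gBq1: "grp Bq1" and gBC: "grp BC"
    using sBq sBq1 sBC submod_grp by auto
  have BqZq: "Bq \<subseteq> Zq" unfolding Bq_def Zq_def by (rule Bkq_Zkq)
  have BqZq1: "Bq1 \<subseteq> Zq1" unfolding Bq1_def Zq1_def by (rule Bkq_Zkq)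
  have BCZC: "BC \<subseteq> ZC" using BqZq unfolding BC_def ZC_def Bq_def Zq_def by auto
  have BCBq: "BC \<subseteq> Bq" and ZCZq: "ZC \<subseteq> Zq" and ZCC: "ZC \<subseteq> Cpq A p q"
    unfolding BC_def Bq_def ZC_def Zq_def by auto
  have kerB: "{y \<in> Bq. proj (q + 1) y = 0} = BC"
    unfolding BC_def Bq_def using proj_Cpq[OF _ pq] Cpq_proj Bkq_Ck Bkq_fix by blast
  have kerZ: "{y \<in> Zq. proj (q + 1) y = 0} = ZC"
    unfolding ZC_def Zq_def using proj_Cpq[OF _ pq] Cpq_proj Zkq_Ck Zkq_fix by blast
  have imB: "proj (q + 1) ` Bq = Bq1" unfolding Bq_def Bq1_def by (rule Bkq_proj)
  have imZ: "proj (q + 1) ` Zq = Zq1" unfolding Zq_def Zq1_def by (rule Zkq_proj)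
  have c3': "qmap id Bq (coset BC z) = coset Bq (id z)" for z
    by (rule qmap_coset[OF gBq]) (use sBC BCBq in \<open>auto simp: is_submod_def\<close>)
  have c3: "qmap id Bq (coset BC z) = coset Bq z" for z using c3'[of z] by simp
  have c4: "qmap (proj (q + 1)) Bq1 (coset Bq z) = coset Bq1 (proj (q + 1) z)" for z
  proof (rule qmap_coset[OF gBq1])
    show "0 \<in> Bq" using sBq by (simp add: is_submod_def)
    fix x assume "x - z \<in> Bq"
    hence "proj (q + 1) (x - z) \<in> Bq1" using imB by blast
    thus "proj (q + 1) x - proj (q + 1) z \<in> Bq1" by (simp add: proj_diff)
  qed
  have row3: "short_exact (qmap id Bq) (qmap (proj (q + 1)) Bq1) (coset Bq1 0)
       (cosets ZC BC) (cosets Zq Bq) (cosets Zq1 Bq1)"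
    unfolding short_exact_def
  proof (intro conjI)
    show "inj_on (qmap id Bq) (cosets ZC BC)"
    proof (rule inj_onI)
      fix X Y assume X: "X \<in> cosets ZC BC" and Y: "Y \<in> cosets ZC BC"
        and eq: "qmap id Bq X = qmap id Bq Y"
      obtain z where z: "z \<in> ZC" "X = coset BC z" using X by (auto simp: cosets_def)
      obtain z' where z': "z' \<in> ZC" "Y = coset BC z'" using Y by (auto simp: cosets_def)
      have "z - z' \<in> Bq" using eq z z' c3 coset_eq[OF gBq] by simp
      moreover have "z - z' \<in> Cpq A p q" using z z' ZCC submod_diff[OF Cpq_submod] by blast
      ultimately have "z - z' \<in> BC" unfolding BC_def Bq_def by simp
      thus "X = Y" using z z' coset_eq[OF gBC] by simp
    qed
  next
    show "qmap id Bq ` cosets ZC BC =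
      {y \<in> cosets Zq Bq. qmap (proj (q + 1)) Bq1 y = coset Bq1 0}"
    proof (intro set_eqI iffI)
      fix Y assume "Y \<in> qmap id Bq ` cosets ZC BC"
      then obtain z where z: "z \<in> ZC" "Y = coset Bq z" using c3 by (auto simp: cosets_def)
      have "proj (q + 1) z = 0" using z(1) kerZ by blast
      thus "Y \<in> {y \<in> cosets Zq Bq. qmap (proj (q + 1)) Bq1 y = coset Bq1 0}"
        using z ZCZq c4 by (auto simp: cosets_def)
    next
      fix Y assume "Y \<in> {y \<in> cosets Zq Bq. qmap (proj (q + 1)) Bq1 y = coset Bq1 0}"
      then obtain z where z: "z \<in> Zq" "Y = coset Bq z" "coset Bq1 (proj (q + 1) z) = coset Bq1 0"
        using c4 by (auto simp: cosets_def)
      have "proj (q + 1) z \<in> Bq1" using z(3) coset_eq[OF gBq1] by simp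
      then obtain b where b: "b \<in> Bq" "proj (q + 1) z = proj (q + 1) b" using imB by force
      have zb: "z - b \<in> Zq" using submod_diff[OF sZq z(1)] b(1) BqZq by blast
      have "proj (q + 1) (z - b) = 0" using b(2) by (simp add: proj_diff)
      hence zbC: "z - b \<in> ZC" using zb kerZ by blast
      have "Y = coset Bq (z - b)" using z(2) coset_eq[OF gBq] b(1) gBq
        by (simp add: grp_def)
      thus "Y \<in> qmap id Bq ` cosets ZC BC" using zbC c3 by (auto simp: cosets_def)
    qed
  next
    have "qmap (proj (q + 1)) Bq1 ` cosets Zq Bq = coset Bq1 ` (proj (q + 1) ` Zq)"
      unfolding cosets_def image_image c4 ..
    thus "qmap (proj (q + 1)) Bq1 ` cosets Zq Bq = cosets Zq1 Bq1"
      using imZ by (simp add: cosets_def)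
  qed
  show ?thesis
  proof (intro conjI)
    show "is_submod (lscale sc) Bq" by (fact sBq)
    show "is_submod (lscale sc) Bq1" by (fact sBq1)
    show "is_submod (lscale sc) Zq" by (fact sZq)
    show "is_submod (lscale sc) Zq1" by (fact sZq1)
    show "is_submod (lscale sc) BC" by (fact sBC)
    show "is_submod (lscale sc) ZC" by (fact sZC)
    show "short_exact id (proj (q + 1)) 0 BC Bq Bq1"
      unfolding short_exact_def using kerB imB by auto
    show "short_exact id (proj (q + 1)) 0 ZC Zq Zq1"
      unfolding short_exact_def using kerZ imZ by auto
    show "short_exact (qmap id Bq) (qmap (proj (q + 1)) Bq1) (coset Bq1 0)
       (cosets ZC BC) (cosets Zq Bq) (cosets Zq1 Bq1)" by (fact row3)
    show "short_exact id (coset BC) (coset BC 0) BC ZC (cosets ZC BC)"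
      by (rule column_exact[OF gBC BCZC])
    show "short_exact id (coset Bq) (coset Bq 0) Bq Zq (cosets Zq Bq)"
      by (rule column_exact[OF gBq BqZq])
    show "short_exact id (coset Bq1) (coset Bq1 0) Bq1 Zq1 (cosets Zq1 Bq1)"
      by (rule column_exact[OF gBq1 BqZq1])
    show "\<forall>b\<in>BC. id (id b) = id (id b)" by simp
    show "\<forall>b\<in>Bq. proj (q + 1) (id b) = id (proj (q + 1) b)" by simp
    show "\<forall>z\<in>ZC. qmap id Bq (coset BC z) = coset Bq (id z)" using c3 by simp
    show "\<forall>z\<in>Zq. qmap (proj (q + 1)) Bq1 (coset Bq z) = coset Bq1 (proj (q + 1) z)" using c4 by simp
  qed
qed

end
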